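(* A left cancellative semigroup $S$ has either exactly one $\mathcal{R}$-class or infinitely many $\mathcal{R}$-classes.
   Context: $S$ is left cancellative if $ax=ay$ implies $x=y$ for all $a,x,y\in S$. $\mathcal{R}$ is Green's relation on $S$: $x\,\mathcal{R}\,y$ iff $xS^1=yS^1$. *)

theory Defs
  imports Main
begin

(* Semigroup S = the ambient type of class semigroup_mult. *)

definition left_cancellative :: "'a::semigroup_mult itself \<Rightarrow> bool" where
  "left_cancellative _ \<longleftrightarrow> (\<forall>a x y :: 'a. a * x = a * y \<longrightarrow> x = y)"

(* principal right ideal x S^1 = {x} \<union> x S *)
definition right_ideal1 :: "'a::semigroup_mult \<Rightarrow> 'a set" where
  "right_ideal1 x = insert x (range (\<lambda>s. x * s))"

definition greenR :: "('a::semigroup_mult \<times> 'a) set" where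
  "greenR = {(x, y). right_ideal1 x = right_ideal1 y}"

definition R_classes :: "'a::semigroup_mult itself \<Rightarrow> 'a set set" where
  "R_classes _ = (UNIV :: 'a set) // greenR"

end

theory Submission
  imports Defs
begin

lemma ri_self: "x \<in> right_ideal1 x"
  by (simp add: right_ideal1_def)

lemma ri_trans: "y \<in> right_ideal1 a \<Longrightarrow> right_ideal1 y \<subseteq> right_ideal1 a"
  unfolding right_ideal1_def by (auto simp: mult.assoc)

lemma ri_sub_iff: "right_ideal1 x \<subseteq> right_ideal1 y \<longleftrightarrow> x \<in> right_ideal1 y"
  using ri_self ri_trans by blast

lemma ri_mem_mult:
  assumes "left_cancellative TYPE('a::semigroup_mult)"
  shows "((a::'a) * x \<in> right_ideal1 (a * y)) \<longleftrightarrow> x \<in> right_ideal1 y"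
proof
  assume "a * x \<in> right_ideal1 (a * y)"
  then have "a * x = a * y \<or> (\<exists>s. a * x = a * (y * s))"
    by (auto simp: right_ideal1_def mult.assoc)
  then show "x \<in> right_ideal1 y"
    using assms unfolding left_cancellative_def right_ideal1_def by blast
next
  assume "x \<in> right_ideal1 y"
  then show "a * x \<in> right_ideal1 (a * y)"
    by (auto simp: right_ideal1_def mult.assoc)
qed

lemma ri_eq_mult:
  assumes "left_cancellative TYPE('a::semigroup_mult)"
  shows "right_ideal1 ((a::'a) * x) = right_ideal1 (a * y) \<longleftrightarrow> right_ideal1 x = right_ideal1 y"
  using ri_mem_mult[OF assms] ri_sub_iff by (metis subset_antisym order_refl)

theorem mainTheorem8:
  assumes "left_cancellative TYPE('a::semigroup_mult)"
  shows "card (R_classes TYPE('a)) = 1 \<or> infinite (R_classes TYPE('a))"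
proof (rule disjCI)
  assume fin: "\<not> infinite (R_classes TYPE('a))"
  let ?I = "range (right_ideal1 :: 'a \<Rightarrow> 'a set)"
  define k where "k = (\<lambda>J::'a set. {y. right_ideal1 y = J})"
  have C: "R_classes TYPE('a) = k ` ?I"
    unfolding R_classes_def quotient_def greenR_def k_def by auto
  have injk: "inj_on k ?I"
  proof (rule inj_onI)
    fix J1 J2 assume "J1 \<in> ?I" "J2 \<in> ?I" "k J1 = k J2"
    then obtain x1 x2 where "J1 = right_ideal1 x1" "J2 = right_ideal1 x2" by auto
    with \<open>k J1 = k J2\<close> show "J1 = J2" unfolding k_def by blast
  qed
  have finI: "finite ?I" using fin C injk finite_image_iff by auto
  have all: "\<And>y a. (y::'a) \<in> right_ideal1 a"
  proof -
    fix y a :: 'a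
    define \<phi> where "\<phi> = (\<lambda>J. right_ideal1 (a * (SOME x. J = right_ideal1 x)))"
    have phi: "\<phi> (right_ideal1 x) = right_ideal1 (a * x)" for x
    proof -
      have "right_ideal1 x = right_ideal1 (SOME z. right_ideal1 x = right_ideal1 z)"
        by (rule someI_ex) auto
      then show ?thesis unfolding \<phi>_def using ri_eq_mult[OF assms] by metis
    qed
    have injp: "inj_on \<phi> ?I"
    proof (rule inj_onI)
      fix J1 J2 assume "J1 \<in> ?I" "J2 \<in> ?I" "\<phi> J1 = \<phi> J2"
      then obtain x1 x2 where e: "J1 = right_ideal1 x1" "J2 = right_ideal1 x2" by auto
      with \<open>\<phi> J1 = \<phi> J2\<close> have "right_ideal1 (a * x1) = right_ideal1 (a * x2)"
        by (simp add: phi)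
      then show "J1 = J2" using e ri_eq_mult[OF assms] by simp
    qed
    have sub: "\<phi> ` ?I \<subseteq> ?I" by (auto simp: phi)
    have surj: "\<phi> ` ?I = ?I" by (rule endo_inj_surj[OF finI sub injp])
    have "right_ideal1 y \<in> \<phi> ` ?I" unfolding surj by (rule rangeI)
    then obtain x where "right_ideal1 y = \<phi> (right_ideal1 x)"
      by blast
    then have "right_ideal1 y = right_ideal1 (a * x)" by (simp add: phi)
    then have "y \<in> right_ideal1 (a * x)" using ri_self[of y] by simp
    moreover have "a * x \<in> right_ideal1 a" by (simp add: right_ideal1_def)
    ultimately show "y \<in> right_ideal1 a" using ri_trans by blast
  qed
  fix a :: 'a
  have "?I = {right_ideal1 a}"
    using all ri_sub_iff by (auto intro: subset_antisym)
  then have "card ?I = 1" by simp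
  then show "card (R_classes TYPE('a)) = 1"
    using C injk card_image by metis
qed

end
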